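(* Let $\mathbb{X},\mathbb{Y}$ be real Banach spaces of dimension greater than $1$. Then the pair $(\mathbb{X},\mathbb{Y})$ has the strong Bishop-Phelps-Bollobás property (sBPBp) if and only if for every $\epsilon>0$ and every nonzero $T\in\mathbb{L}(\mathbb{X},\mathbb{Y})$ there exists $\delta=\delta(\epsilon,T)$ with $0<\delta<\|T\|$ such that \[M_T(\delta)\subseteq\bigcup_{x\in M_T}\big(B(x,\epsilon)\cap S_{\mathbb{X}}\big).\]
   Context: The pair $(\mathbb{X},\mathbb{Y})$ has sBPBp if for every $\epsilon>0$ and every $T\in\mathbb{L}(\mathbb{X},\mathbb{Y})$ with $\|T\|=1$ there exists $\eta(\epsilon,T)>0$ such that whenever $x_0\in S_{\mathbb{X}}$ satisfies $\|Tx_0\|>1-\eta(\epsilon,T)$, there exists $x_1\in S_{\mathbb{X}}$ with $\|Tx_1\|=1$ and $\|x_1-x_0\|<\epsilon$. Here $M_T=\{x\in S_{\mathbb{X}}:\|Tx\|=\|T\|\}$, and for nonzero $T$ and $0<\delta<\|T\|$, $M_T(\delta)=\{x\in S_{\mathbb{X}}:\|Tx\|>\|T\|-\delta\}$; $B(x,r)$ is the open ball of centre $x$ and radius $r$. *)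

theory Defs
  imports "HOL-Analysis.Analysis"
begin

definition dim_gt_one :: "'a::real_vector itself \<Rightarrow> bool" where
  "dim_gt_one _ \<longleftrightarrow> (\<exists>x y :: 'a. x \<noteq> y \<and> independent {x, y})"

definition sBPBp :: "'a::real_normed_vector itself \<Rightarrow> 'b::real_normed_vector itself \<Rightarrow> bool" where
  "sBPBp _ _ \<longleftrightarrow>
     (\<forall>\<epsilon>>0. \<forall>T :: ('a, 'b) blinfun. norm T = 1 \<longrightarrow>
        (\<exists>\<eta>>0. \<forall>x0 \<in> sphere (0::'a) 1. norm (blinfun_apply T x0) > 1 - \<eta> \<longrightarrow>
            (\<exists>x1 \<in> sphere (0::'a) 1. norm (blinfun_apply T x1) = 1 \<and> norm (x1 - x0) < \<epsilon>)))"

definition M_T :: "('a::real_normed_vector, 'b::real_normed_vector) blinfun \<Rightarrow> 'a set" where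
  "M_T T = {x \<in> sphere 0 1. norm (blinfun_apply T x) = norm T}"

definition M_T_delta :: "('a::real_normed_vector, 'b::real_normed_vector) blinfun \<Rightarrow> real \<Rightarrow> 'a set" where
  "M_T_delta T \<delta> = {x \<in> sphere 0 1. norm (blinfun_apply T x) > norm T - \<delta>}"

end

theory Submission
  imports Defs
begin

theorem theorem2p4:
  assumes "dim_gt_one TYPE('a::banach)"
      and "dim_gt_one TYPE('b::banach)"
  shows "sBPBp TYPE('a) TYPE('b) \<longleftrightarrow>
    (\<forall>\<epsilon>>0. \<forall>T :: ('a, 'b) blinfun. T \<noteq> 0 \<longrightarrow>
       (\<exists>\<delta>. 0 < \<delta> \<and> \<delta> < norm T \<and>
          M_T_delta T \<delta> \<subseteq> (\<Union>x \<in> M_T T. ball x \<epsilon> \<inter> sphere 0 1)))"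
proof
  assume S: "sBPBp TYPE('a) TYPE('b)"
  show "\<forall>\<epsilon>>0. \<forall>T :: ('a, 'b) blinfun. T \<noteq> 0 \<longrightarrow>
       (\<exists>\<delta>. 0 < \<delta> \<and> \<delta> < norm T \<and>
          M_T_delta T \<delta> \<subseteq> (\<Union>x \<in> M_T T. ball x \<epsilon> \<inter> sphere 0 1))"
  proof (intro allI impI)
    fix \<epsilon> :: real and T :: "('a,'b) blinfun"
    assume e: "\<epsilon> > 0" and T: "T \<noteq> 0"
    define c where "c = norm T"
    have c: "c > 0" using T c_def by simp
    define U where "U = (1 / c) *\<^sub>R T"
    have U1: "norm U = 1" using c by (simp add: U_def c_def)
    have Uapp: "\<And>x. norm (blinfun_apply U x) = norm (blinfun_apply T x) / c"
      using c by (simp add: U_def blinfun.scaleR_left)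
    obtain \<eta> where eta: "\<eta> > 0" and H: "\<forall>x0 \<in> sphere (0::'a) 1. norm (blinfun_apply U x0) > 1 - \<eta> \<longrightarrow>
            (\<exists>x1 \<in> sphere (0::'a) 1. norm (blinfun_apply U x1) = 1 \<and> norm (x1 - x0) < \<epsilon>)"
      using S e U1 unfolding sBPBp_def by blast
    define \<delta> where "\<delta> = min (\<eta> * c) (c / 2)"
    have d0: "\<delta> > 0" using eta c by (simp add: \<delta>_def)
    have d1: "\<delta> < norm T" using c by (simp add: \<delta>_def c_def[symmetric])
    have "M_T_delta T \<delta> \<subseteq> (\<Union>x \<in> M_T T. ball x \<epsilon> \<inter> sphere 0 1)"
    proof
      fix x0 assume x0: "x0 \<in> M_T_delta T \<delta>"
      hence xs: "x0 \<in> sphere 0 1" and gt: "norm (blinfun_apply T x0) > c - \<delta>"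
        by (auto simp: M_T_delta_def c_def)
      have "c - \<delta> \<ge> c - \<eta> * c" by (simp add: \<delta>_def)
      hence g2: "norm (blinfun_apply T x0) > (1 - \<eta>) * c" using gt by (simp add: algebra_simps)
      have "norm (blinfun_apply T x0) / c > 1 - \<eta>"
        using g2 c by (simp add: pos_less_divide_eq)
      hence "norm (blinfun_apply U x0) > 1 - \<eta>" by (simp add: Uapp)
      then obtain x1 where x1: "x1 \<in> sphere 0 1" "norm (blinfun_apply U x1) = 1" "norm (x1 - x0) < \<epsilon>"
        using H xs by blast
      have "norm (blinfun_apply T x1) = norm T" using x1(2) c by (simp add: Uapp c_def)
      hence "x1 \<in> M_T T" using x1(1) by (simp add: M_T_def)
      moreover have "x0 \<in> ball x1 \<epsilon> \<inter> sphere 0 1" using x1(3) xs by (simp add: dist_norm)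
      ultimately show "x0 \<in> (\<Union>x \<in> M_T T. ball x \<epsilon> \<inter> sphere 0 1)" by blast
    qed
    thus "\<exists>\<delta>. 0 < \<delta> \<and> \<delta> < norm T \<and>
          M_T_delta T \<delta> \<subseteq> (\<Union>x \<in> M_T T. ball x \<epsilon> \<inter> sphere 0 1)" using d0 d1 by blast
  qed
next
  assume R: "\<forall>\<epsilon>>0. \<forall>T :: ('a, 'b) blinfun. T \<noteq> 0 \<longrightarrow>
       (\<exists>\<delta>. 0 < \<delta> \<and> \<delta> < norm T \<and>
          M_T_delta T \<delta> \<subseteq> (\<Union>x \<in> M_T T. ball x \<epsilon> \<inter> sphere 0 1))"
  show "sBPBp TYPE('a) TYPE('b)"
    unfolding sBPBp_def
  proof (intro allI impI)
    fix \<epsilon> :: real and T :: "('a,'b) blinfun"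
    assume e: "\<epsilon> > 0" and T1: "norm T = 1"
    hence "T \<noteq> 0" by auto
    then obtain \<delta> where d: "0 < \<delta>" and sub: "M_T_delta T \<delta> \<subseteq> (\<Union>x \<in> M_T T. ball x \<epsilon> \<inter> sphere 0 1)"
      using R e by blast
    show "\<exists>\<eta>>0. \<forall>x0 \<in> sphere (0::'a) 1. norm (blinfun_apply T x0) > 1 - \<eta> \<longrightarrow>
            (\<exists>x1 \<in> sphere (0::'a) 1. norm (blinfun_apply T x1) = 1 \<and> norm (x1 - x0) < \<epsilon>)"
    proof (intro exI[of _ \<delta>] conjI d ballI impI)
      fix x0 :: 'a assume xs: "x0 \<in> sphere 0 1" and gt: "norm (blinfun_apply T x0) > 1 - \<delta>"
      hence "x0 \<in> M_T_delta T \<delta>" using T1 by (simp add: M_T_delta_def)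
      then obtain x where x: "x \<in> M_T T" "x0 \<in> ball x \<epsilon>" using sub by blast
      thus "\<exists>x1 \<in> sphere (0::'a) 1. norm (blinfun_apply T x1) = 1 \<and> norm (x1 - x0) < \<epsilon>"
        using T1 by (auto simp: M_T_def dist_norm)
    qed
  qed
qed

end
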